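(* Let $\gamma\in(0,1]$ and let $T$ be a positive integer, with $T\ge2$ if $\gamma=1$. For all $\delta>0$ and $\eta>0$, $$\mathbb{P}\left(\exists\,t\in\{1,\dots,T\}:\ N_t(\gamma^2)>0,\ \frac{R_t(\gamma)-M_t(\gamma)}{\sqrt{N_t(\gamma^2)}}>\delta\right)\le\left\lceil\frac{\log\big(\gamma^{-2T}n_T(\gamma^2)\big)}{\log(1+\eta)}\right\rceil\exp\!\left(-\frac{2\delta^2}{B^2}\Big(1-\frac{\eta^2}{16}\Big)\right).$$
   Context: On a probability space $(\Omega,\mathcal A,\mathbb P)$, let $(X_t)_{t\ge1}$ be independent random variables with $X_t\in[0,B]$ a.s. and $\mu_t=\mathbb E[X_t]$. Let $(\mathcal F_t)_{t\ge0}$ be a filtration with $\sigma(X_1,\dots,X_t)\subset\mathcal F_t$ and $X_s$ independent of $\mathcal F_t$ for $s>t$. Let $(\epsilon_t)_{t\ge1}$ be $\{0,1\}$-valued with $\epsilon_t$ $\mathcal F_{t-1}$-measurable. For $\gamma\in(0,1]$ set $R_t(\gamma)=\sum_{s=1}^t\gamma^{t-s}X_s\epsilon_s$, $M_t(\gamma)=\sum_{s=1}^t\gamma^{t-s}\mu_s\epsilon_s$, $N_t(\gamma)=\sum_{s=1}^t\gamma^{t-s}\epsilon_s$ (so $N_t(\gamma^2)=\sum_{s=1}^t\gamma^{2(t-s)}\epsilon_s$), and $n_t(\gamma)=\sum_{s=1}^t\gamma^{t-s}$ (so $n_T(\gamma^2)=\sum_{s=1}^T\gamma^{2(T-s)}$).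 *)

theory Defs
  imports "HOL-Probability.Probability"
begin

definition Rdisc :: "(nat \<Rightarrow> 'a \<Rightarrow> real) \<Rightarrow> (nat \<Rightarrow> 'a \<Rightarrow> real) \<Rightarrow> real \<Rightarrow> nat \<Rightarrow> 'a \<Rightarrow> real" where
  "Rdisc X eps g t \<omega> = (\<Sum>s=1..t. g ^ (t - s) * X s \<omega> * eps s \<omega>)"

definition Mdisc :: "(nat \<Rightarrow> real) \<Rightarrow> (nat \<Rightarrow> 'a \<Rightarrow> real) \<Rightarrow> real \<Rightarrow> nat \<Rightarrow> 'a \<Rightarrow> real" where
  "Mdisc mu eps g t \<omega> = (\<Sum>s=1..t. g ^ (t - s) * mu s * eps s \<omega>)"

definition Ndisc :: "(nat \<Rightarrow> 'a \<Rightarrow> real) \<Rightarrow> real \<Rightarrow> nat \<Rightarrow> 'a \<Rightarrow> real" where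
  "Ndisc eps g t \<omega> = (\<Sum>s=1..t. g ^ (t - s) * eps s \<omega>)"

definition ndisc :: "real \<Rightarrow> nat \<Rightarrow> real" where
  "ndisc g t = (\<Sum>s=1..t. g ^ (t - s))"

end

theory Submission
  imports Defs
begin


lemma slice_exists:
  fixes q v :: real
  assumes "q > 1" "1 \<le> v" "v \<le> q ^ D" "D \<ge> 1"
  shows "\<exists>k<D. q ^ k \<le> v \<and> v \<le> q ^ Suc k"
  using assms(3,4)
proof (induction D)
  case 0 then show ?case by simp
next
  case (Suc D)
  show ?case
  proof (cases "D = 0")
    case True then show ?thesis using Suc.prems assms(2) by auto
  next
    case False
    show ?thesis
    proof (cases "v \<le> q ^ D")
      case True
      then obtain k where "k < D" "q ^ k \<le> v \<and> v \<le> q ^ Suc k" using Suc.IH False by auto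
      then show ?thesis by (intro exI[of _ k]) auto
    next
      case False
      then show ?thesis using Suc.prems by (intro exI[of _ D]) auto
    qed
  qed
qed

lemma slice_bound:
  fixes B \<delta> y a v s lam :: real
  assumes B: "B > 0" and \<delta>: "\<delta> > 0" and y: "y > 1" and a: "a > 0"
    and av: "a \<le> v" and va: "v \<le> a * y ^ 4" and s: "s > \<delta> * sqrt v"
    and lam: "lam = 4 * \<delta> / (B\<^sup>2 * (sqrt a * y))"
  shows "lam * s - lam\<^sup>2 * B\<^sup>2 * v / 8 \<ge> 2 * \<delta>\<^sup>2 / B\<^sup>2 * (1 - (y ^ 4 - 1)\<^sup>2 / 16)"
proof -
  define x where "x = sqrt v / (sqrt a * y)"
  have sa: "sqrt a > 0" using a by simp
  have v0: "v > 0" using a av by simp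
  have lam0: "lam > 0" using lam B \<delta> sa y by simp
  have "sqrt v \<le> sqrt (a * y ^ 4)" using va by simp
  also have "sqrt (a * y ^ 4) = sqrt a * y\<^sup>2"
  proof -
    have y4: "y ^ 4 = (y\<^sup>2)\<^sup>2" by (simp add: power4_eq_xxxx power2_eq_square mult_ac)
    show ?thesis by (simp only: y4 real_sqrt_mult real_sqrt_abs) simp
  qed
  finally have "sqrt v \<le> sqrt a * y\<^sup>2" .
  then have xy: "x \<le> y" unfolding x_def using sa y by (simp add: divide_le_eq power2_eq_square mult_ac)
  have "sqrt a \<le> sqrt v" using av by simp
  then have xy2: "1 / y \<le> x" unfolding x_def using sa y by (simp add: divide_simps)
  have y1: "y - 1 \<le> (y ^ 4 - 1) / 4"
  proof -
    have "y ^ 4 - 1 - 4 * (y - 1) = (y - 1) * (y ^ 3 + y\<^sup>2 + y - 3)"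
      by (simp add: algebra_simps power2_eq_square power3_eq_cube power4_eq_xxxx)
    moreover have "y ^ 3 + y\<^sup>2 + y - 3 \<ge> 0"
    proof -
      have "y\<^sup>2 \<ge> 1" "y ^ 3 \<ge> 1" using y by (simp_all add: one_le_power less_imp_le)
      then show ?thesis using y by linarith
    qed
    moreover have "(y - 1) * (y ^ 3 + y\<^sup>2 + y - 3) \<ge> 0" using y calculation(2) by simp
    ultimately have "y ^ 4 - 1 - 4 * (y - 1) \<ge> 0" by metis
    then show ?thesis by simp
  qed
  have y2: "1 - 1 / y \<le> y - 1"
  proof -
    have "(y - 1)\<^sup>2 / y \<ge> 0" using y by simp
    moreover have "(y - 1)\<^sup>2 / y = (y - 1) - (1 - 1 / y)"
      using y by (simp add: field_simps power2_eq_square)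
    ultimately show ?thesis by linarith
  qed
  have ax: "\<bar>x - 1\<bar> \<le> (y ^ 4 - 1) / 4" using xy xy2 y1 y2 by linarith
  have "(x - 1)\<^sup>2 \<le> ((y ^ 4 - 1) / 4)\<^sup>2"
    using ax by (metis abs_ge_zero order_trans power2_abs power_mono)
  moreover have "2 * x - x\<^sup>2 = 1 - (x - 1)\<^sup>2" by (simp add: power2_eq_square algebra_simps)
  moreover have "((y ^ 4 - 1) / 4)\<^sup>2 = (y ^ 4 - 1)\<^sup>2 / 16" by (simp add: power_divide)
  ultimately have key: "2 * x - x\<^sup>2 \<ge> 1 - (y ^ 4 - 1)\<^sup>2 / 16" by linarith
  have "lam * s \<ge> lam * (\<delta> * sqrt v)" using s lam0 by simp
  moreover have "lam * (\<delta> * sqrt v) = 4 * \<delta>\<^sup>2 / B\<^sup>2 * x"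
    using lam B sa y unfolding x_def by (simp add: field_simps power2_eq_square)
  moreover have "lam\<^sup>2 * B\<^sup>2 * v / 8 = 2 * \<delta>\<^sup>2 / B\<^sup>2 * x\<^sup>2"
  proof -
    have "x\<^sup>2 = v / (a * y\<^sup>2)" unfolding x_def using v0 a
      by (simp add: power_divide power_mult_distrib)
    moreover have "lam\<^sup>2 = 16 * \<delta>\<^sup>2 / (B ^ 4 * (a * y\<^sup>2))"
      using lam a by (simp add: power_divide power_mult_distrib real_sqrt_pow2 flip: power_mult)
    ultimately have "lam\<^sup>2 * B\<^sup>2 * v / 8 = 16 * \<delta>\<^sup>2 / (B ^ 4 * (a * y\<^sup>2)) * B\<^sup>2 * (x\<^sup>2 * (a * y\<^sup>2)) / 8"
      using a y by (simp add: field_simps)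
    also have "\<dots> = 2 * \<delta>\<^sup>2 / B\<^sup>2 * x\<^sup>2"
      using B y a by (simp add: field_simps power2_eq_square power4_eq_xxxx)
    finally show ?thesis .
  qed
  moreover have "2 * \<delta>\<^sup>2 / B\<^sup>2 * (2 * x - x\<^sup>2) = 4 * \<delta>\<^sup>2 / B\<^sup>2 * x - 2 * \<delta>\<^sup>2 / B\<^sup>2 * x\<^sup>2"
    using B by (simp add: field_simps)
  ultimately have "lam * s - lam\<^sup>2 * B\<^sup>2 * v / 8 \<ge> 2 * \<delta>\<^sup>2 / B\<^sup>2 * (2 * x - x\<^sup>2)"
    by linarith
  moreover have "2 * \<delta>\<^sup>2 / B\<^sup>2 * (2 * x - x\<^sup>2) \<ge> 2 * \<delta>\<^sup>2 / B\<^sup>2 * (1 - (y ^ 4 - 1)\<^sup>2 / 16)"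
    using key B by (intro mult_left_mono) auto
  ultimately show ?thesis by linarith
qed




lemma (in prob_space) indep_prod_nn:
  assumes sub: "subalgebra M G"
    and ind: "indep_set (sets G) (sets (vimage_algebra (space M) Y borel))"
    and U: "U \<in> borel_measurable G" and Y: "Y \<in> borel_measurable M"
    and h: "h \<in> borel_measurable borel"
    and U0: "\<And>\<omega>. 0 \<le> U \<omega>" and h0: "\<And>x. 0 \<le> h x"
  shows "(\<integral>\<^sup>+\<omega>. ennreal (U \<omega> * h (Y \<omega>)) \<partial>M) = (\<integral>\<^sup>+\<omega>. ennreal (U \<omega>) \<partial>M) * (\<integral>\<^sup>+\<omega>. ennreal (h (Y \<omega>)) \<partial>M)"
proof -
  have UM: "U \<in> borel_measurable M" using measurable_from_subalg[OF sub U] .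
  have hY: "(h \<circ> Y) \<in> borel_measurable M" using h Y by measurable
  have s1: "sigma_sets (space M) {U -` A \<inter> space M | A. A \<in> sets borel} \<subseteq> sets G"
  proof -
    have "space G = space M" using sub by (simp add: subalgebra_def)
    moreover have sub1: "{U -` A \<inter> space M | A. A \<in> sets borel} \<subseteq> sets G"
    proof safe
      fix A :: "real set" assume "A \<in> sets borel"
      then show "U -` A \<inter> space M \<in> sets G"
        using measurable_sets[OF U] \<open>space G = space M\<close> by metis
    qed
    have "sigma_sets (space G) {U -` A \<inter> space M | A. A \<in> sets borel} \<subseteq> sets G"
      by (rule sets.sigma_sets_subset[OF sub1])
    then show ?thesis using \<open>space G = space M\<close> by simp
  qed
  have s2: "sigma_sets (space M) {(h \<circ> Y) -` A \<inter> space M | A. A \<in> sets borel}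
      \<subseteq> sets (vimage_algebra (space M) Y borel)"
    unfolding sets_vimage_algebra
  proof (rule sigma_sets_mono')
    show "{(h \<circ> Y) -` A \<inter> space M | A. A \<in> sets borel} \<subseteq> {Y -` A \<inter> space M | A. A \<in> sets borel}"
    proof safe
      fix A :: "real set" assume "A \<in> sets borel"
      then have "h -` A \<in> sets borel" using h by (simp add: measurable_sets_borel)
      then show "\<exists>A'. (h \<circ> Y) -` A \<inter> space M = Y -` A' \<inter> space M \<and> A' \<in> sets borel"
        by (intro exI[of _ "h -` A"]) auto
    qed
  qed
  have "indep_sets (case_bool (sigma_sets (space M) {U -` A \<inter> space M | A. A \<in> sets borel})
      (sigma_sets (space M) {(h \<circ> Y) -` A \<inter> space M | A. A \<in> sets borel})) UNIV"
    by (rule indep_sets_mono_sets[OF ind[unfolded indep_set_def]]) (use s1 s2 in \<open>simp split: bool.split\<close>)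
  then have "indep_var borel U borel (h \<circ> Y)"
    unfolding indep_var_eq indep_set_def using UM hY by blast
  then have iv1: "indep_var borel (ennreal \<circ> U) borel (ennreal \<circ> (h \<circ> Y))"
    by (rule indep_var_compose) measurable
  have iv: "indep_vars (\<lambda>_. borel) (case_bool (ennreal \<circ> U) (ennreal \<circ> (h \<circ> Y))) UNIV"
  proof -
    have eqb: "case_bool borel borel = (\<lambda>_::bool. borel :: ennreal measure)" by (simp add: fun_eq_iff split: bool.split)
    show ?thesis using iv1 unfolding indep_var_def eqb .
  qed
  have "(\<integral>\<^sup>+\<omega>. (\<Prod>i\<in>UNIV. case_bool (ennreal \<circ> U) (ennreal \<circ> (h \<circ> Y)) i \<omega>) \<partial>M)
      = (\<Prod>i\<in>UNIV. \<integral>\<^sup>+\<omega>. case_bool (ennreal \<circ> U) (ennreal \<circ> (h \<circ> Y)) i \<omega> \<partial>M)"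
    by (rule indep_vars_nn_integral) (use iv in auto)
  then show ?thesis by (simp add: UNIV_bool mult.commute ennreal_mult U0 h0 o_def)
qed

primrec stopQ :: "(nat \<Rightarrow> 'a \<Rightarrow> real) \<Rightarrow> real \<Rightarrow> nat \<Rightarrow> 'a \<Rightarrow> real" where
  "stopQ W L 0 \<omega> = W 0 \<omega>"
| "stopQ W L (Suc n) \<omega> = (if (\<forall>t\<in>{..n}. W t \<omega> < L) then W (Suc n) \<omega> else stopQ W L n \<omega>)"

lemma stopQ_eq: "(\<forall>t\<in>{..n}. W t \<omega> < L) \<Longrightarrow> stopQ W L n \<omega> = W n \<omega>"
  by (induction n) auto

lemma stopQ_nonneg: "(\<And>t. W t \<omega> \<ge> 0) \<Longrightarrow> stopQ W L n \<omega> \<ge> 0"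
  by (induction n) auto

lemma stopQ_ge: "(\<exists>t\<in>{..n}. W t \<omega> \<ge> L) \<Longrightarrow> stopQ W L n \<omega> \<ge> L"
proof (induction n)
  case 0 then show ?case by simp
next
  case (Suc n)
  show ?case
  proof (cases "\<forall>t\<in>{..n}. W t \<omega> < L")
    case True
    obtain t where t: "t \<le> Suc n" "W t \<omega> \<ge> L" using Suc.prems by auto
    then have "t = Suc n" using True by (metis atMost_iff le_SucE not_less)
    then have "W (Suc n) \<omega> \<ge> L" using t by simp
    then show ?thesis using True by simp
  next
    case False
    then have "\<exists>t\<in>{..n}. W t \<omega> \<ge> L" by (auto simp: not_less)
    then have "stopQ W L n \<omega> \<ge> L" by (rule Suc.IH)
    then show ?thesis by (simp only: stopQ.simps if_not_P[OF False])
  qed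
qed

locale th5 = prob_space M for M :: "'a measure" +
  fixes X :: "nat \<Rightarrow> 'a \<Rightarrow> real" and F :: "nat \<Rightarrow> 'a measure"
    and eps :: "nat \<Rightarrow> 'a \<Rightarrow> real" and B g :: real
  assumes B_pos: "B > 0" and g_pos: "g > 0"
    and X_meas: "\<And>t. t \<ge> 1 \<Longrightarrow> X t \<in> borel_measurable M"
    and X_bounded: "\<And>t. t \<ge> 1 \<Longrightarrow> AE \<omega> in M. 0 \<le> X t \<omega> \<and> X t \<omega> \<le> B"
    and F_filt: "filtration (space M) F"
    and F_sub: "\<And>t. subalgebra M (F t)"
    and X_adapted: "\<And>s t. 1 \<le> s \<Longrightarrow> s \<le> t \<Longrightarrow> X s \<in> borel_measurable (F t)"
    and X_future_indep: "\<And>s t. t < s \<Longrightarrow> indep_set (sets (F t)) (sets (vimage_algebra (space M) (X s) borel))"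
    and eps_01: "\<And>t \<omega>. t \<ge> 1 \<Longrightarrow> \<omega> \<in> space M \<Longrightarrow> eps t \<omega> \<in> {0, 1}"
    and eps_pred: "\<And>t. t \<ge> 1 \<Longrightarrow> eps t \<in> borel_measurable (F (t - 1))"
begin

definition "mu s = expectation (X s)"
definition "S t \<omega> = (\<Sum>s=1..t. g ^ s * eps s \<omega> * (X s \<omega> - mu s))"
definition "V t \<omega> = (\<Sum>s=1..t. (g ^ s)\<^sup>2 * eps s \<omega>)"
definition "W lam t \<omega> = exp (lam * S t \<omega> - lam\<^sup>2 * B\<^sup>2 * V t \<omega> / 8)"

lemma F_mono_meas: "i \<le> j \<Longrightarrow> f \<in> borel_measurable (F i) \<Longrightarrow> f \<in> borel_measurable (F j)"
proof -
  assume "i \<le> j" "f \<in> borel_measurable (F i)"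
  moreover have "subalgebra (F j) (F i)"
    using filtration.space_F[OF F_filt] filtration.sets_F_mono[OF F_filt \<open>i \<le> j\<close>]
    by (simp add: subalgebra_def)
  ultimately show ?thesis using measurable_from_subalg by blast
qed

lemma eps_meas_F: "1 \<le> s \<Longrightarrow> s \<le> t \<Longrightarrow> eps s \<in> borel_measurable (F t)"
  by (rule F_mono_meas[OF _ eps_pred]) auto

lemma S_meas_F: "S t \<in> borel_measurable (F t)"
  unfolding S_def
  by (intro borel_measurable_sum borel_measurable_times borel_measurable_const borel_measurable_diff
        eps_meas_F X_adapted) auto

lemma V_meas_F: "V t \<in> borel_measurable (F t)"
  unfolding V_def
  by (intro borel_measurable_sum borel_measurable_times borel_measurable_const eps_meas_F) auto

lemma W_meas_F: "W lam t \<in> borel_measurable (F t)"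
  unfolding W_def using S_meas_F V_meas_F by measurable

lemma W_meas: "W lam t \<in> borel_measurable M"
  using measurable_from_subalg[OF F_sub W_meas_F] .

lemma W_pos: "W lam t \<omega> > 0" by (simp add: W_def)

lemma W0: "W lam 0 \<omega> = 1" by (simp add: W_def S_def V_def)


lemma eps_meas: "1 \<le> s \<Longrightarrow> eps s \<in> borel_measurable M"
  using measurable_from_subalg[OF F_sub eps_pred] .

lemma super:
  assumes lam: "lam > 0" and G: "G \<in> sets (F n)"
  shows "(\<integral>\<^sup>+\<omega>. ennreal (indicator G \<omega> * W lam (Suc n) \<omega>) \<partial>M)
       \<le> (\<integral>\<^sup>+\<omega>. ennreal (indicator G \<omega> * W lam n \<omega>) \<partial>M)"
proof -
  define a where "a = lam * g ^ Suc n"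
  define e where "e = eps (Suc n)"
  define h where "h x = exp (a * (x - mu (Suc n)) - a\<^sup>2 * B\<^sup>2 / 8)" for x
  define U where "U \<omega> = indicator G \<omega> * W lam n \<omega>" for \<omega>
  have a_pos: "a > 0" using lam g_pos by (simp add: a_def)
  have GM: "G \<in> sets M" using F_sub G by (auto simp: subalgebra_def)
  have e01: "\<omega> \<in> space M \<Longrightarrow> e \<omega> \<in> {0, 1}" for \<omega> using eps_01[of "Suc n"] by (simp add: e_def)
  have U0: "U \<omega> \<ge> 0" for \<omega> by (simp add: U_def W_pos less_imp_le)
  have hpos: "h x \<ge> 0" for x by (simp add: h_def)
  have Xm: "X (Suc n) \<in> borel_measurable M" using X_meas by simp
  have em: "e \<in> borel_measurable M" using eps_meas by (simp add: e_def)
  have Um_F: "U \<in> borel_measurable (F n)"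
    unfolding U_def using G W_meas_F by measurable
  have Um: "U \<in> borel_measurable M" using measurable_from_subalg[OF F_sub Um_F] .
  have hm: "h \<in> borel_measurable borel" unfolding h_def by measurable
  have step: "W lam (Suc n) \<omega> = W lam n \<omega> * ((1 - e \<omega>) + e \<omega> * h (X (Suc n) \<omega>))"
    if \<omega>: "\<omega> \<in> space M" for \<omega>
  proof -
    have S1: "S (Suc n) \<omega> = S n \<omega> + g ^ Suc n * e \<omega> * (X (Suc n) \<omega> - mu (Suc n))"
      by (simp add: S_def e_def)
    have V1: "V (Suc n) \<omega> = V n \<omega> + (g ^ Suc n)\<^sup>2 * e \<omega>"
      by (simp add: V_def e_def)
    show ?thesis
    proof (cases "e \<omega> = 0")
      case True then show ?thesis by (simp add: W_def S1 V1)
    next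
      case False
      then have "e \<omega> = 1" using e01[OF \<omega>] by auto
      then show ?thesis
        unfolding W_def S1 V1 h_def a_def
        by (simp add: exp_add[symmetric] algebra_simps power_mult_distrib)
    qed
  qed
  interpret H: interval_bounded_random_variable M "X (Suc n)" 0 B
    by unfold_locales (use Xm X_bounded[of "Suc n"] in auto)
  have hint: "(\<integral>\<^sup>+\<omega>. ennreal (h (X (Suc n) \<omega>)) \<partial>M) \<le> 1"
  proof -
    have "(\<integral>\<^sup>+\<omega>. ennreal (h (X (Suc n) \<omega>)) \<partial>M)
        = (\<integral>\<^sup>+\<omega>. ennreal (exp (- (a\<^sup>2 * B\<^sup>2 / 8))) * ennreal (exp (a * (X (Suc n) \<omega> - expectation (X (Suc n))))) \<partial>M)"
      by (intro nn_integral_cong) (simp add: h_def mu_def ennreal_mult[symmetric] exp_add[symmetric])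
    also have "\<dots> = ennreal (exp (- (a\<^sup>2 * B\<^sup>2 / 8))) * (\<integral>\<^sup>+\<omega>. ennreal (exp (a * (X (Suc n) \<omega> - expectation (X (Suc n))))) \<partial>M)"
      by (rule nn_integral_cmult) measurable
    also have "\<dots> \<le> ennreal (exp (- (a\<^sup>2 * B\<^sup>2 / 8))) * ennreal (exp (a\<^sup>2 * (B - 0)\<^sup>2 / 8))"
      by (intro mult_left_mono H.Hoeffdings_lemma_nn_integral a_pos) simp
    also have "\<dots> = 1"
      by (simp add: ennreal_mult[symmetric] exp_add[symmetric])
    finally show ?thesis .
  qed
  have ind: "(\<integral>\<^sup>+\<omega>. ennreal (U \<omega> * \<bar>e \<omega>\<bar> * h (X (Suc n) \<omega>)) \<partial>M)
      = (\<integral>\<^sup>+\<omega>. ennreal (U \<omega> * \<bar>e \<omega>\<bar>) \<partial>M) * (\<integral>\<^sup>+\<omega>. ennreal (h (X (Suc n) \<omega>)) \<partial>M)"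
  proof (rule indep_prod_nn[OF F_sub X_future_indep _ Xm hm])
    show "(\<lambda>\<omega>. U \<omega> * \<bar>e \<omega>\<bar>) \<in> borel_measurable (F n)"
      using Um_F eps_pred[of "Suc n"] by (simp add: e_def)
  qed (auto simp: U0 hpos)
  have "(\<integral>\<^sup>+\<omega>. ennreal (indicator G \<omega> * W lam (Suc n) \<omega>) \<partial>M)
      = (\<integral>\<^sup>+\<omega>. ennreal (U \<omega> * (1 - e \<omega>)) + ennreal (U \<omega> * \<bar>e \<omega>\<bar> * h (X (Suc n) \<omega>)) \<partial>M)"
  proof (intro nn_integral_cong)
    fix \<omega> assume \<omega>: "\<omega> \<in> space M"
    have "e \<omega> \<in> {0, 1}" using e01[OF \<omega>] .
    then show "ennreal (indicator G \<omega> * W lam (Suc n) \<omega>) = ennreal (U \<omega> * (1 - e \<omega>)) + ennreal (U \<omega> * \<bar>e \<omega>\<bar> * h (X (Suc n) \<omega>))"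
      using step[OF \<omega>] by (auto simp: U_def mult.assoc)
  qed
  also have "\<dots> = (\<integral>\<^sup>+\<omega>. ennreal (U \<omega> * (1 - e \<omega>)) \<partial>M) + (\<integral>\<^sup>+\<omega>. ennreal (U \<omega> * \<bar>e \<omega>\<bar> * h (X (Suc n) \<omega>)) \<partial>M)"
    by (rule nn_integral_add) (use Um em Xm hm in measurable)
  also have "\<dots> \<le> (\<integral>\<^sup>+\<omega>. ennreal (U \<omega> * (1 - e \<omega>)) \<partial>M) + (\<integral>\<^sup>+\<omega>. ennreal (U \<omega> * \<bar>e \<omega>\<bar>) \<partial>M)"
    unfolding ind using hint by (intro add_left_mono) (metis mult.right_neutral mult_left_mono zero_le)
  also have "\<dots> = (\<integral>\<^sup>+\<omega>. ennreal (U \<omega> * (1 - e \<omega>)) + ennreal (U \<omega> * \<bar>e \<omega>\<bar>) \<partial>M)"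
    by (rule nn_integral_add[symmetric]) (use Um em in measurable)
  also have "\<dots> = (\<integral>\<^sup>+\<omega>. ennreal (indicator G \<omega> * W lam n \<omega>) \<partial>M)"
  proof (intro nn_integral_cong)
    fix \<omega> assume \<omega>: "\<omega> \<in> space M"
    have "e \<omega> \<in> {0, 1}" using e01[OF \<omega>] .
    then show "ennreal (U \<omega> * (1 - e \<omega>)) + ennreal (U \<omega> * \<bar>e \<omega>\<bar>) = ennreal (indicator G \<omega> * W lam n \<omega>)"
      by (auto simp: U_def)
  qed
  finally show ?thesis .
qed


lemma maximal:
  assumes lam: "lam > 0" and L: "L > 0"
  shows "measure M {\<omega>\<in>space M. \<exists>t\<in>{..n}. W lam t \<omega> \<ge> L} \<le> 1 / L"
proof -
  define Q where "Q = stopQ (W lam) L"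
  define G where "G m = {\<omega>\<in>space M. \<forall>t\<in>{..m}. W lam t \<omega> < L}" for m
  have GF: "G m \<in> sets (F m)" for m
  proof -
    have "Measurable.pred (F m) (\<lambda>\<omega>. \<forall>t\<in>{..m}. W lam t \<omega> < L)"
    proof (intro pred_intros_finite)
      fix t assume "t \<in> {..m}"
      then have [measurable]: "W lam t \<in> borel_measurable (F m)"
        using F_mono_meas W_meas_F by (metis atMost_iff)
      show "Measurable.pred (F m) (\<lambda>\<omega>. W lam t \<omega> < L)" by measurable
    qed simp
    then show ?thesis unfolding pred_def G_def filtration.space_F[OF F_filt] .
  qed
  have Qnn: "Q m \<omega> \<ge> 0" for m \<omega>
    unfolding Q_def by (rule stopQ_nonneg) (simp add: W_pos less_imp_le)
  have Qm: "Q m \<in> borel_measurable M" for m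
  proof (induction m)
    case 0 then show ?case using W_meas by (simp add: Q_def)
  next
    case (Suc m)
    have [measurable]: "W lam t \<in> borel_measurable M" for t using W_meas .
    have [measurable]: "Q m \<in> borel_measurable M" using Suc .
    have "Q (Suc m) = (\<lambda>\<omega>. if (\<forall>t\<in>{..m}. W lam t \<omega> < L) then W lam (Suc m) \<omega> else Q m \<omega>)"
      by (simp add: Q_def fun_eq_iff)
    also have "\<dots> \<in> borel_measurable M" by measurable
    finally show ?case .
  qed
  have GM: "G m \<in> sets M" for m using GF F_sub by (auto simp: subalgebra_def)
  have step: "(\<integral>\<^sup>+\<omega>. ennreal (Q (Suc m) \<omega>) \<partial>M) \<le> (\<integral>\<^sup>+\<omega>. ennreal (Q m \<omega>) \<partial>M)" for m
  proof -
    have [measurable]: "W lam t \<in> borel_measurable M" for t using W_meas .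
    have [measurable]: "Q m \<in> borel_measurable M" using Qm .
    have [measurable]: "G m \<in> sets M" using GM .
    have "(\<integral>\<^sup>+\<omega>. ennreal (Q (Suc m) \<omega>) \<partial>M)
        = (\<integral>\<^sup>+\<omega>. ennreal (indicator (G m) \<omega> * W lam (Suc m) \<omega>) + ennreal (indicator (space M - G m) \<omega> * Q m \<omega>) \<partial>M)"
      by (intro nn_integral_cong) (auto simp: Q_def G_def)
    also have "\<dots> = (\<integral>\<^sup>+\<omega>. ennreal (indicator (G m) \<omega> * W lam (Suc m) \<omega>) \<partial>M) + (\<integral>\<^sup>+\<omega>. ennreal (indicator (space M - G m) \<omega> * Q m \<omega>) \<partial>M)"
      by (rule nn_integral_add) measurable
    also have "\<dots> \<le> (\<integral>\<^sup>+\<omega>. ennreal (indicator (G m) \<omega> * W lam m \<omega>) \<partial>M) + (\<integral>\<^sup>+\<omega>. ennreal (indicator (space M - G m) \<omega> * Q m \<omega>) \<partial>M)"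
      by (intro add_right_mono super lam GF)
    also have "\<dots> = (\<integral>\<^sup>+\<omega>. ennreal (indicator (G m) \<omega> * W lam m \<omega>) + ennreal (indicator (space M - G m) \<omega> * Q m \<omega>) \<partial>M)"
      by (rule nn_integral_add[symmetric]) measurable
    also have "\<dots> = (\<integral>\<^sup>+\<omega>. ennreal (Q m \<omega>) \<partial>M)"
      by (intro nn_integral_cong) (auto simp: Q_def G_def stopQ_eq split: split_indicator)
    finally show ?thesis .
  qed
  have Qle: "(\<integral>\<^sup>+\<omega>. ennreal (Q m \<omega>) \<partial>M) \<le> 1" for m
  proof (induction m)
    case 0
    have "(\<integral>\<^sup>+\<omega>. ennreal (Q 0 \<omega>) \<partial>M) = (\<integral>\<^sup>+\<omega>. ennreal 1 \<partial>M)"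
      by (simp add: Q_def W0)
    also have "\<dots> = 1" by (simp add: emeasure_space_1)
    finally show ?case by simp
  next
    case (Suc m) then show ?case using step[of m] by (rule order_trans[rotated])
  qed
  define A where "A = {\<omega>\<in>space M. \<exists>t\<in>{..n}. W lam t \<omega> \<ge> L}"
  have AM: "A \<in> sets M"
  proof -
    have [measurable]: "W lam t \<in> borel_measurable M" for t using W_meas .
    show ?thesis unfolding A_def by measurable
  qed
  have "ennreal L * emeasure M A = (\<integral>\<^sup>+\<omega>. ennreal L * indicator A \<omega> \<partial>M)"
    by (rule nn_integral_cmult_indicator[symmetric, OF AM])
  also have "\<dots> \<le> (\<integral>\<^sup>+\<omega>. ennreal (Q n \<omega>) \<partial>M)"
  proof (intro nn_integral_mono)
    fix \<omega> assume "\<omega> \<in> space M"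
    show "ennreal L * indicator A \<omega> \<le> ennreal (Q n \<omega>)"
    proof (cases "\<omega> \<in> A")
      case True
      then have "Q n \<omega> \<ge> L" unfolding Q_def A_def by (intro stopQ_ge) auto
      then show ?thesis using True by (simp add: ennreal_leI)
    qed simp
  qed
  also have "\<dots> \<le> 1" by (rule Qle)
  finally have "ennreal (L * measure M A) \<le> 1"
    by (simp add: emeasure_eq_measure ennreal_mult L less_imp_le)
  then have "L * measure M A \<le> 1" by (simp add: ennreal_le_1)
  then show ?thesis unfolding A_def[symmetric] using L by (simp add: field_simps)
qed

end


theorem theorem5:
  fixes M :: "'a measure" and X :: "nat \<Rightarrow> 'a \<Rightarrow> real" and F :: "nat \<Rightarrow> 'a measure"
    and eps :: "nat \<Rightarrow> 'a \<Rightarrow> real" and B \<gamma> \<delta> \<eta> :: real and T :: nat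
  assumes "prob_space M"
    and B_pos: "B > 0"
    and X_meas: "\<And>t. t \<ge> 1 \<Longrightarrow> X t \<in> borel_measurable M"
    and X_indep: "prob_space.indep_vars M (\<lambda>_. borel) X {1..}"
    and X_bounded: "\<And>t. t \<ge> 1 \<Longrightarrow> AE \<omega> in M. 0 \<le> X t \<omega> \<and> X t \<omega> \<le> B"
    and F_filt: "filtration (space M) F"
    and F_sub: "\<And>t. subalgebra M (F t)"
    and X_adapted: "\<And>s t. 1 \<le> s \<Longrightarrow> s \<le> t \<Longrightarrow> X s \<in> borel_measurable (F t)"
    and X_future_indep: "\<And>s t. t < s \<Longrightarrow> prob_space.indep_set M (sets (F t)) (sets (vimage_algebra (space M) (X s) borel))"
    and eps_01: "\<And>t \<omega>. t \<ge> 1 \<Longrightarrow> \<omega> \<in> space M \<Longrightarrow> eps t \<omega> \<in> {0, 1}"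
    and eps_pred: "\<And>t. t \<ge> 1 \<Longrightarrow> eps t \<in> borel_measurable (F (t - 1))"
    and \<gamma>_range: "0 < \<gamma>" "\<gamma> \<le> 1"
    and T_pos: "T \<ge> 1" and T_ge2: "\<gamma> = 1 \<Longrightarrow> T \<ge> 2"
    and \<delta>_pos: "\<delta> > 0" and \<eta>_pos: "\<eta> > 0"
  shows "measure M {\<omega> \<in> space M. \<exists>t\<in>{1..T}. Ndisc eps (\<gamma>\<^sup>2) t \<omega> > 0 \<and>
            (Rdisc X eps \<gamma> t \<omega> - Mdisc (\<lambda>s. prob_space.expectation M (X s)) eps \<gamma> t \<omega>)
              / sqrt (Ndisc eps (\<gamma>\<^sup>2) t \<omega>) > \<delta>}
         \<le> real_of_int \<lceil>ln (ndisc (\<gamma>\<^sup>2) T / \<gamma> ^ (2 * T)) / ln (1 + \<eta>)\<rceil>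
             * exp (- (2 * \<delta>\<^sup>2 / B\<^sup>2) * (1 - \<eta>\<^sup>2 / 16))"
  proof -
  interpret P: prob_space M by fact
  define g where "g = 1 / \<gamma>"
  have g_pos: "g > 0" and g1: "g \<ge> 1" using \<gamma>_range by (auto simp: g_def)
  interpret T5: th5 M X F eps B g
    by unfold_locales (fact B_pos g_pos X_meas X_bounded F_filt F_sub X_adapted X_future_indep eps_01 eps_pred
      filtration.space_F[OF F_filt] filtration.sets_F_mono[OF F_filt])+
  have mu_eq: "(\<lambda>s. prob_space.expectation M (X s)) = T5.mu" by (simp add: fun_eq_iff T5.mu_def)
  have pw: "\<gamma> ^ (t - s) = \<gamma> ^ t * g ^ s" if "s \<le> t" for s t
    using that \<gamma>_range by (simp add: g_def power_diff power_one_over)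
  have pw2: "(\<gamma>\<^sup>2) ^ (t - s) = \<gamma> ^ (2 * t) * (g ^ s)\<^sup>2" if "s \<le> t" for s t
  proof -
    have "(\<gamma>\<^sup>2) ^ (t - s) = (\<gamma> ^ (t - s))\<^sup>2" by (metis power_mult mult.commute)
    also have "\<dots> = (\<gamma> ^ t)\<^sup>2 * (g ^ s)\<^sup>2" using pw[OF that] by (simp only: power_mult_distrib)
    also have "(\<gamma> ^ t)\<^sup>2 * (g ^ s)\<^sup>2 = \<gamma> ^ (2 * t) * (g ^ s)\<^sup>2"
      by (metis power_mult mult.commute)
    finally show ?thesis .
  qed
  have Req: "Rdisc X eps \<gamma> t \<omega> - Mdisc T5.mu eps \<gamma> t \<omega> = \<gamma> ^ t * T5.S t \<omega>" for t \<omega>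
    unfolding Rdisc_def Mdisc_def T5.S_def sum_subtractf[symmetric] sum_distrib_left
    by (intro sum.cong refl) (simp add: pw algebra_simps)
  have Neq: "Ndisc eps (\<gamma>\<^sup>2) t \<omega> = \<gamma> ^ (2 * t) * T5.V t \<omega>" for t \<omega>
    unfolding Ndisc_def T5.V_def sum_distrib_left
    by (intro sum.cong refl) (simp add: pw2 algebra_simps)
  define U where "U = (\<Sum>s=1..T. (g ^ s)\<^sup>2)"
  have ndeq: "ndisc (\<gamma>\<^sup>2) T = \<gamma> ^ (2 * T) * U"
    unfolding ndisc_def U_def sum_distrib_left
    by (intro sum.cong refl) (simp add: pw2)
  have gpow: "(g ^ s)\<^sup>2 \<ge> 1" for s using g1 by (simp add: one_le_power)
  have U_gt1: "U > 1"
  proof (cases "\<gamma> = 1")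
    case True
    then have "U = real T" by (simp add: U_def g_def)
    then show ?thesis using T_ge2[OF True] by simp
  next
    case False
    then have "g > 1" using \<gamma>_range by (simp add: g_def)
    then have "(g ^ 1)\<^sup>2 > 1" by simp
    moreover have "(g ^ 1)\<^sup>2 \<le> U" unfolding U_def
      by (rule member_le_sum) (use T_pos in auto)
    ultimately show ?thesis by linarith
  qed
  have Ueq: "ndisc (\<gamma>\<^sup>2) T / \<gamma> ^ (2 * T) = U" using ndeq \<gamma>_range by simp
  define q where "q = 1 + \<eta>"
  have q1: "q > 1" using \<eta>_pos by (simp add: q_def)
  define r where "r = ln U / ln q"
  have r_pos: "r > 0" using U_gt1 q1 by (simp add: r_def)
  define D where "D = nat \<lceil>r\<rceil>"
  have "1 \<le> \<lceil>r\<rceil>" using r_pos by simp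
  then have D1: "D \<ge> 1" unfolding D_def by linarith
  have realD: "real D = real_of_int \<lceil>r\<rceil>" using r_pos by (simp add: D_def)
  have qD: "U \<le> q ^ D"
  proof -
    have "r \<le> real D" using realD by simp
    then have "ln U \<le> real D * ln q" using q1 by (simp add: r_def divide_le_eq)
    also have "\<dots> = ln (q ^ D)" using q1 by (simp add: ln_realpow)
    finally show ?thesis using U_gt1 q1 by simp
  qed
  define y where "y = root 4 q"
  have y4: "y ^ 4 = q" using q1 by (simp add: y_def)
  have y1: "y > 1" using q1 by (simp add: y_def)
  define c where "c = 2 * \<delta>\<^sup>2 / B\<^sup>2 * (1 - \<eta>\<^sup>2 / 16)"
  define L where "L = exp c"
  define lamk where "lamk k = 4 * \<delta> / (B\<^sup>2 * (sqrt (q ^ k) * y))" for k :: nat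
  have lamk_pos: "lamk k > 0" for k using B_pos \<delta>_pos y1 q1 by (simp add: lamk_def)
  define A where "A k = {\<omega>\<in>space M. \<exists>t\<in>{..T}. T5.W (lamk k) t \<omega> \<ge> L}" for k
  have AM: "A k \<in> sets M" for k
  proof -
    have [measurable]: "T5.W (lamk k) t \<in> borel_measurable M" for t using T5.W_meas .
    show ?thesis unfolding A_def by measurable
  qed
  have sub: "{\<omega> \<in> space M. \<exists>t\<in>{1..T}. Ndisc eps (\<gamma>\<^sup>2) t \<omega> > 0 \<and>
            (Rdisc X eps \<gamma> t \<omega> - Mdisc (\<lambda>s. prob_space.expectation M (X s)) eps \<gamma> t \<omega>)
              / sqrt (Ndisc eps (\<gamma>\<^sup>2) t \<omega>) > \<delta>} \<subseteq> (\<Union>k\<in>{..<D}. A k)"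
  proof safe
    fix \<omega> t assume \<omega>: "\<omega> \<in> space M" and t: "t \<in> {1..T}"
      and N0: "Ndisc eps (\<gamma>\<^sup>2) t \<omega> > 0"
      and R: "(Rdisc X eps \<gamma> t \<omega> - Mdisc (\<lambda>s. prob_space.expectation M (X s)) eps \<gamma> t \<omega>)
              / sqrt (Ndisc eps (\<gamma>\<^sup>2) t \<omega>) > \<delta>"
    have gt: "\<gamma> ^ t > 0" using \<gamma>_range by simp
    have V0: "T5.V t \<omega> > 0" using N0 gt unfolding Neq by (simp add: zero_less_mult_iff)
    have sq: "sqrt (Ndisc eps (\<gamma>\<^sup>2) t \<omega>) = \<gamma> ^ t * sqrt (T5.V t \<omega>)"
    proof -
      have "\<gamma> ^ (2 * t) = (\<gamma> ^ t)\<^sup>2" by (metis power_mult mult.commute)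
      then show ?thesis unfolding Neq using gt by (simp add: real_sqrt_mult)
    qed
    have "T5.S t \<omega> / sqrt (T5.V t \<omega>) > \<delta>"
      using R unfolding mu_eq Req sq using gt \<gamma>_range by simp
    then have SV: "T5.S t \<omega> > \<delta> * sqrt (T5.V t \<omega>)" using V0 by (simp add: pos_less_divide_eq)
    have e01: "s \<in> {1..t} \<Longrightarrow> eps s \<omega> \<in> {0, 1}" for s using eps_01 \<omega> by auto
    have e0: "s \<in> {1..t} \<Longrightarrow> 0 \<le> eps s \<omega>" for s using e01[of s] by fastforce
    have e1: "s \<in> {1..t} \<Longrightarrow> eps s \<omega> \<le> 1" for s using e01[of s] by fastforce
    have V1: "T5.V t \<omega> \<ge> 1"
    proof -
      obtain s where s: "s \<in> {1..t}" "(g ^ s)\<^sup>2 * eps s \<omega> \<noteq> 0"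
        using V0 unfolding T5.V_def by (metis (no_types, lifting) less_irrefl sum.neutral)
      then have "eps s \<omega> = 1" using e01[OF s(1)] by auto
      then have "1 \<le> (g ^ s)\<^sup>2 * eps s \<omega>" using gpow by simp
      also have "\<dots> \<le> T5.V t \<omega>" unfolding T5.V_def
        by (rule member_le_sum[OF s(1)]) (use e0 in auto)
      finally show ?thesis .
    qed
    have VU: "T5.V t \<omega> \<le> U"
    proof -
      have "T5.V t \<omega> \<le> (\<Sum>s=1..t. (g ^ s)\<^sup>2)" unfolding T5.V_def
        by (intro sum_mono) (use e1 gpow in \<open>auto intro: mult_left_le\<close>)
      also have "\<dots> \<le> U" unfolding U_def
        by (intro sum_mono2) (use t in auto)
      finally show ?thesis .
    qed
    obtain k where k: "k < D" "q ^ k \<le> T5.V t \<omega>" "T5.V t \<omega> \<le> q ^ Suc k"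
      using slice_exists[OF q1 V1 order_trans[OF VU qD] D1] by blast
    have "lamk k * T5.S t \<omega> - (lamk k)\<^sup>2 * B\<^sup>2 * T5.V t \<omega> / 8 \<ge> 2 * \<delta>\<^sup>2 / B\<^sup>2 * (1 - (y ^ 4 - 1)\<^sup>2 / 16)"
      by (rule slice_bound[OF B_pos \<delta>_pos y1 _ k(2) _ SV lamk_def])
         (use q1 k(3) y4 in \<open>auto simp: mult.commute\<close>)
    then have "c \<le> lamk k * T5.S t \<omega> - (lamk k)\<^sup>2 * B\<^sup>2 * T5.V t \<omega> / 8"
      unfolding c_def y4 q_def by simp
    then have "L \<le> T5.W (lamk k) t \<omega>" unfolding L_def T5.W_def by simp
    then have "\<omega> \<in> A k" unfolding A_def using \<omega> t by auto
    then show "\<omega> \<in> (\<Union>k\<in>{..<D}. A k)" using k(1) by auto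
  qed
  have e1: "real D = real_of_int \<lceil>ln (ndisc (\<gamma>\<^sup>2) T / \<gamma> ^ (2 * T)) / ln (1 + \<eta>)\<rceil>"
    unfolding realD Ueq r_def q_def ..
  have e2: "exp (- c) = exp (- (2 * \<delta>\<^sup>2 / B\<^sup>2) * (1 - \<eta>\<^sup>2 / 16))"
    unfolding c_def by simp
  have "measure M {\<omega> \<in> space M. \<exists>t\<in>{1..T}. Ndisc eps (\<gamma>\<^sup>2) t \<omega> > 0 \<and>
            (Rdisc X eps \<gamma> t \<omega> - Mdisc (\<lambda>s. prob_space.expectation M (X s)) eps \<gamma> t \<omega>)
              / sqrt (Ndisc eps (\<gamma>\<^sup>2) t \<omega>) > \<delta>} \<le> measure M (\<Union>k\<in>{..<D}. A k)"
    by (rule P.finite_measure_mono[OF sub]) (use AM in auto)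
  also have "\<dots> \<le> (\<Sum>k\<in>{..<D}. measure M (A k))"
    by (rule measure_UNION_le) (use AM in auto)
  also have "\<dots> \<le> (\<Sum>k\<in>{..<D}. 1 / L)"
    by (intro sum_mono) (unfold A_def, rule T5.maximal[OF lamk_pos], simp add: L_def)
  also have "\<dots> = real D * exp (- c)" by (simp add: L_def exp_minus field_simps)
  also have "\<dots> = real_of_int \<lceil>ln (ndisc (\<gamma>\<^sup>2) T / \<gamma> ^ (2 * T)) / ln (1 + \<eta>)\<rceil>
             * exp (- (2 * \<delta>\<^sup>2 / B\<^sup>2) * (1 - \<eta>\<^sup>2 / 16))"
    unfolding e1 e2 ..
  finally show ?thesis .
qed

end
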